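(* Let $n>2$ and $0<\epsilon<\frac{1}{n(n+1)}$. For $1\le i\le n-1$, let player $i$ have the uniform probability measure on the interval $(\frac in-\epsilon,\frac in+\epsilon)$ as valuation, and let player $n$ have the uniform (Lebesgue) valuation on $[0,1]$. Then: (a) in every envy-free complete connected division, all cut points lie in $\{\frac in: 1\le i\le n-1\}$ (each piece is of the form $(\frac{j-1}{n},\frac jn)$), player $n$ has utility exactly $\frac1n$, and each player $i\le n-1$ has utility exactly $\frac12$; (b) the partial division giving player $n$ the interval $(0,\frac1n)$, player 1 the interval $(\frac1n,\frac2n-2\epsilon)$, and each player $2\le i\le n-1$ the interval $\big(i(\frac1n-\epsilon),(i+1)(\frac1n-\epsilon)\big)$, and discarding the rest, is envy-free, gives player $n$ utility $\frac1n$, player 1 utility $\frac12$, and each player $2\le i\le n-1$ utility $1$.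
   Context: A (connected) division for players $1,\dots,n$ of the cake $[0,1]$ is a sequence $(X_1,\dots,X_n)$ of pairwise disjoint open intervals (possibly empty), $X_i$ being player $i$'s piece; it is complete if the union of the closures of the $X_i$ equals $[0,1]$, and partial otherwise. Each player $i$ has a valuation $v_i$, a nonatomic probability measure on $[0,1]$; $u_i(x,j)=v_i(X_j)$. A division is envy-free if $u_i(x,i)\ge u_i(x,j)$ for all $i,j$. *)

theory Defs
  imports "HOL-Analysis.Analysis"
begin

definition is_division :: "nat \<Rightarrow> (nat \<Rightarrow> real set) \<Rightarrow> bool" where
  "is_division n X \<longleftrightarrow>
     (\<forall>i\<in>{1..n}. (\<exists>a b. X i = {a<..<b}) \<and> X i \<subseteq> {0..1}) \<and>
     (\<forall>i\<in>{1..n}. \<forall>j\<in>{1..n}. i \<noteq> j \<longrightarrow> X i \<inter> X j = {})"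

definition is_complete :: "nat \<Rightarrow> (nat \<Rightarrow> real set) \<Rightarrow> bool" where
  "is_complete n X \<longleftrightarrow> (\<Union>i\<in>{1..n}. closure (X i)) = {0..1}"

definition valuation :: "nat \<Rightarrow> real \<Rightarrow> nat \<Rightarrow> real measure" where
  "valuation n eps i = uniform_measure lborel
     (if i = n then {0..1} else {real i / real n - eps <..< real i / real n + eps})"

definition util :: "nat \<Rightarrow> real \<Rightarrow> nat \<Rightarrow> real set \<Rightarrow> real" where
  "util n eps i S = measure (valuation n eps i) S"

definition envy_free :: "nat \<Rightarrow> real \<Rightarrow> (nat \<Rightarrow> real set) \<Rightarrow> bool" where
  "envy_free n eps X \<longleftrightarrow>
     (\<forall>i\<in>{1..n}. \<forall>j\<in>{1..n}. util n eps i (X i) \<ge> util n eps i (X j))"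

definition example_division :: "nat \<Rightarrow> real \<Rightarrow> nat \<Rightarrow> real set" where
  "example_division n eps i =
     (if i = n then {0<..<1 / real n}
      else if i = 1 then {1 / real n <..< 2 / real n - 2 * eps}
      else {real i * (1 / real n - eps) <..< real (i + 1) * (1 / real n - eps)})"

end

theory Submission
  imports Defs
begin

lemma meas_Ioo: "measure lborel {a<..<(b::real)} = max 0 (b - a)"
  by (cases "a \<le> b") auto

lemma Ioo_inter: "{a<..<(b::real)} \<inter> {c<..<d} = {max a c<..<min b d}"
  by auto

lemma disj_Ioo:
  assumes "{a<..<(b::real)} \<inter> {c<..<d} = {}"
  shows "b \<le> a \<or> d \<le> c \<or> b \<le> c \<or> d \<le> a"
proof -
  have "{max a c<..<min b d} = {}" using assms by (simp add: Ioo_inter)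
  then have "min b d \<le> max a c" by (simp add: greaterThanLessThan_empty_iff)
  then show ?thesis by (auto simp: min_def max_def split: if_splits)
qed

lemma Ioo_sub01:
  assumes "{a<..<(b::real)} \<subseteq> {0..1}" "a < b"
  shows "0 \<le> a" "b \<le> 1"
proof -
  have "closure {a<..<b} \<subseteq> closure {0..1::real}" using assms(1) by (rule closure_mono)
  then have "{a..b} \<subseteq> {0..1::real}" using assms(2) by simp
  then show "0 \<le> a" "b \<le> 1" using assms(2) by auto
qed

lemma sum_ge1:
  assumes "finite I" "(\<Union>i\<in>I. closure (X i)) = {0..1::real}"
    "\<forall>i\<in>I. X i = {a i<..<b i}"
  shows "(\<Sum>i\<in>I. measure lborel (X i)) \<ge> 1"
proof -
  have "1 = measure lborel {0..1::real}" by simp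
  also have "\<dots> = measure lborel (\<Union>i\<in>I. closure (X i))" using assms(2) by simp
  also have "\<dots> \<le> (\<Sum>i\<in>I. measure lborel (closure (X i)))"
    by (rule measure_UNION_le) (use assms(1) in auto)
  also have "\<dots> = (\<Sum>i\<in>I. measure lborel (X i))"
  proof (rule sum.cong)
    fix i assume "i \<in> I"
    then show "measure lborel (closure (X i)) = measure lborel (X i)"
      using assms(3) by (cases "a i < b i") auto
  qed simp
  finally show ?thesis .
qed

lemma sum_le:
  assumes "finite S" "\<forall>j\<in>S. X j = {a j<..<b j} \<and> X j \<subseteq> {u..v::real}"
    "\<forall>i\<in>S. \<forall>j\<in>S. i \<noteq> j \<longrightarrow> X i \<inter> X j = {}" "u \<le> v"
  shows "(\<Sum>j\<in>S. measure lborel (X j)) \<le> v - u"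
proof -
  have "(\<Sum>j\<in>S. measure lborel (X j)) = measure lborel (\<Union>j\<in>S. X j)"
  proof (rule measure_finite_Union[symmetric])
    show "disjoint_family_on X S" using assms(3) by (auto simp: disjoint_family_on_def)
    fix j assume "j \<in> S"
    then show "emeasure lborel (X j) \<noteq> \<infinity>" using assms(2)
      by (cases "a j \<le> b j") auto
  qed (use assms in auto)
  also have "\<dots> \<le> measure lborel {u..v}"
    by (rule measure_mono_fmeasurable) (use assms in \<open>auto simp: fmeasurable_def\<close>)
  also have "\<dots> = v - u" using assms by simp
  finally show ?thesis .
qed

lemma util_other:
  assumes "i \<noteq> n" "eps > 0"
  shows "util n eps i {a<..<b} = max 0 (min b (real i * (1/real n) + eps) - max a (real i * (1/real n) - eps)) / (2*eps)"
proof -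
  let ?lo = "real i / real n - eps" and ?hi = "real i / real n + eps"
  have "emeasure lborel {?lo<..<?hi} = ennreal (2*eps)" using assms by simp
  then have e: "emeasure lborel {?lo<..<?hi} \<noteq> 0" "emeasure lborel {?lo<..<?hi} \<noteq> \<infinity>" using assms by auto
  show ?thesis unfolding util_def valuation_def using assms
    by (simp add: measure_uniform_measure[OF e] Ioo_inter meas_Ioo max.commute min.commute)
qed

lemma util_n:
  assumes "S \<subseteq> {0..1}" "S \<in> sets lborel"
  shows "util n eps n S = measure lborel S"
proof -
  have e: "emeasure lborel {0..1::real} \<noteq> 0" "emeasure lborel {0..1::real} \<noteq> \<infinity>" by auto
  show ?thesis unfolding util_def valuation_def using assms
    by (simp add: measure_uniform_measure[OF e] Int_absorb1 inf.absorb2)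
qed

lemma key_arith:
  fixes ak bk c d m eps h :: real
  assumes "eps > 0" "2*eps < h" "c < m" "m < d" "d - c > h"
    "bk \<le> ak \<or> d \<le> ak \<or> bk \<le> c"
    "max 0 (min bk (m+eps) - max ak (m-eps)) \<ge> max 0 (min d (m+eps) - max c (m-eps))"
  shows False
  using assms by (auto simp: max_def min_def split: if_splits)

lemma grid_util:
  fixes i j :: nat and eps h :: real
  assumes "eps > 0" "2*eps < h" "h > 0"
  shows "max 0 (min (real j * h) (real i * h + eps) - max ((real j - 1) * h) (real i * h - eps)) / (2*eps)
     = (if j = i \<or> j = i + 1 then 1/2 else 0)"
proof -
  consider "j + 1 \<le> i" | "j = i" | "j = i + 1" | "j \<ge> i + 2" by linarith
  then show ?thesis
  proof cases
    case 1
    then have "real j + 1 \<le> real i" by linarith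
    then have "(real j + 1) * h \<le> real i * h" using assms by (intro mult_right_mono) auto
    then show ?thesis using 1 assms by (auto simp: max_def min_def algebra_simps)
  next
    case 2 then show ?thesis using assms by (auto simp: max_def min_def algebra_simps)
  next
    case 3 then show ?thesis using assms by (auto simp: max_def min_def algebra_simps)
  next
    case 4
    then have "real i + 2 \<le> real j" by linarith
    then have "(real i + 2) * h \<le> real j * h" using assms by (intro mult_right_mono) auto
    then show ?thesis using 4 assms by (auto simp: max_def min_def algebra_simps)
  qed
qed

lemma partA:
  fixes n :: nat and eps :: real and X
  assumes n2: "n > 2" and ep: "0 < eps" and eb: "eps < 1 / (real n * (real n + 1))"
    and dv: "is_division n X" and comp: "is_complete n X" and ef: "envy_free n eps X"
  shows "(\<forall>i\<in>{1..n}. \<exists>j\<in>{1..n}. X i = {(real j - 1) / real n <..< real j / real n}) \<and>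
            util n eps n (X n) = 1 / real n \<and>
            (\<forall>i\<in>{1..n-1}. util n eps i (X i) = 1 / 2)"
proof -
  define h where "h = 1 / real n"
  have hpos: "h > 0" using n2 by (simp add: h_def)
  have nh: "real n * h = 1" using n2 by (simp add: h_def)
  have e1: "(real n + 1) * eps < h"
  proof -
    have pos: "0 < real n * (real n + 1)" using n2 by simp
    have "eps * (real n * (real n + 1)) < 1" using eb pos_less_divide_eq[OF pos] by blast
    then show ?thesis using n2 by (simp add: h_def field_simps)
  qed
  have "4 * eps \<le> (real n + 1) * eps" using n2 ep by (intro mult_right_mono) auto
  then have e2: "4 * eps < h" using e1 by linarith
  have "\<forall>i\<in>{1..n}. \<exists>p. X i = {fst p<..<snd p}" using dv unfolding is_division_def
    by (metis fst_conv snd_conv)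
  then obtain f where f: "\<forall>i\<in>{1..n}. X i = {fst (f i)<..<snd (f i)}" by metis
  define a where "a i = fst (f i)" for i
  define b where "b i = snd (f i)" for i
  have ab: "\<forall>i\<in>{1..n}. X i = {a i<..<b i}" using f by (simp add: a_def b_def)
  have sub: "\<forall>i\<in>{1..n}. X i \<subseteq> {0..1}" using dv unfolding is_division_def by auto
  have disj: "\<forall>i\<in>{1..n}. \<forall>j\<in>{1..n}. i \<noteq> j \<longrightarrow> X i \<inter> X j = {}"
    using dv unfolding is_division_def by auto
  define l where "l i = measure lborel (X i)" for i
  have lab: "\<forall>i\<in>{1..n}. l i = max 0 (b i - a i)" using ab by (simp add: l_def meas_Ioo)
  have utn: "\<forall>i\<in>{1..n}. util n eps n (X i) = l i"
    using sub ab by (auto simp: l_def intro!: util_n)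
  have n1: "n \<in> {1..n}" using n2 by auto
  have lle: "\<forall>i\<in>{1..n}. l i \<le> l n"
    using ef utn n1 unfolding envy_free_def by metis
  have s1: "(\<Sum>i\<in>{1..n}. l i) \<ge> 1"
    unfolding l_def by (rule sum_ge1[OF _ _ ab]) (use comp in \<open>auto simp: is_complete_def\<close>)
  have uo: "util n eps i (X k) = max 0 (min (b k) (real i*h+eps) - max (a k) (real i*h - eps))/(2*eps)"
    if "i \<noteq> n" "k \<in> {1..n}" for i k
    using ab that util_other[OF that(1) ep] by (simp add: h_def)
  have Lle: "l n \<le> h"
  proof (rule ccontr)
    assume "\<not> ?thesis" then have L: "l n > h" by simp
    have anb: "b n - a n > h" using L lab n1 hpos by auto
    have c0: "0 \<le> a n" "b n \<le> 1" using Ioo_sub01[of "a n" "b n"] sub ab n1 anb hpos by auto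
    define k where "k = nat \<lfloor>a n * real n\<rfloor> + 1"
    have rk: "real k = of_int \<lfloor>a n * real n\<rfloor> + 1" using c0 n2 by (simp add: k_def)
    have fl: "real k - 1 \<le> a n * real n" "a n * real n < real k"
      using rk by linarith+
    have "(real k - 1) * h \<le> a n * real n * h" using fl hpos by (intro mult_right_mono) auto
    moreover have "a n * real n * h < real k * h" using fl hpos by simp
    moreover have "a n * real n * h = a n" by (metis nh mult.assoc mult_1_right)
    moreover have "(real k - 1) * h = real k * h - h" by (simp add: left_diff_distrib)
    ultimately have km: "a n < real k * h" "real k * h \<le> a n + h"
      by linarith+
    have "real k * h < real n * h" using km anb c0 nh by linarith
    then have "k < n" using hpos by simp
    moreover have "k \<ge> 1" by (simp add: k_def)
    ultimately have k1: "k \<in> {1..n}" "k \<noteq> n" by auto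
    have "util n eps k (X k) \<ge> util n eps k (X n)"
      using ef k1 n1 unfolding envy_free_def by blast
    then have "max 0 (min (b k) (real k*h+eps) - max (a k) (real k*h - eps)) \<ge>
               max 0 (min (b n) (real k*h+eps) - max (a n) (real k*h - eps))"
      using uo[OF k1(2) k1(1)] uo[OF k1(2) n1] ep by (simp add: divide_right_mono_neg divide_le_cancel)
    moreover have "b k \<le> a k \<or> b n \<le> a k \<or> b k \<le> a n"
    proof -
      have "X k \<inter> X n = {}" using disj k1 n1 by blast
      then have "{a k<..<b k} \<inter> {a n<..<b n} = {}" using ab k1 n1 by simp
      then show ?thesis using disj_Ioo[of "a k" "b k" "a n" "b n"] anb hpos by auto
    qed
    ultimately show False
      using key_arith[of eps h "a n" "real k * h" "b n" "b k" "a k"] ep e2 km anb by linarith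
  qed
  have lh: "\<forall>i\<in>{1..n}. l i = h"
  proof (rule ccontr)
    assume "\<not> ?thesis"
    then obtain i where i: "i \<in> {1..n}" "l i < h" using lle Lle by force
    have "(\<Sum>i\<in>{1..n}. l i) < (\<Sum>i\<in>{1..n}. h)"
      by (rule sum_strict_mono_ex1) (use lle Lle i in force)+
    also have "\<dots> = 1" using nh by simp
    finally show False using s1 by simp
  qed
  have akb: "\<forall>i\<in>{1..n}. a i < b i \<and> b i = a i + h" using lh lab hpos by force
  have bnd: "\<forall>i\<in>{1..n}. 0 \<le> a i \<and> b i \<le> 1"
  proof
    fix i assume i: "i \<in> {1..n}"
    then have "{a i<..<b i} \<subseteq> {0..1}" "a i < b i" using sub ab akb by auto
    then show "0 \<le> a i \<and> b i \<le> 1" using Ioo_sub01 by blast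
  qed
  have grid: "\<exists>j\<in>{1..n}. X k = {(real j - 1)*h<..<real j*h}" if k: "k \<in> {1..n}" for k
  proof -
    define SL where "SL = {j\<in>{1..n}. b j \<le> a k}"
    define SR where "SR = {j\<in>{1..n}. b k \<le> a j}"
    have un: "SL \<union> SR = {1..n} - {k}"
    proof
      show "SL \<union> SR \<subseteq> {1..n} - {k}" using akb k hpos by (auto simp: SL_def SR_def)
      show "{1..n} - {k} \<subseteq> SL \<union> SR"
      proof
        fix j assume j: "j \<in> {1..n} - {k}"
        then have "b j \<le> a j \<or> b k \<le> a k \<or> b j \<le> a k \<or> b k \<le> a j"
        proof -
          have "X j \<inter> X k = {}" using disj j k by blast
          then have "{a j<..<b j} \<inter> {a k<..<b k} = {}" using ab j k by simp
          then show ?thesis using disj_Ioo by blast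
        qed
        then show "j \<in> SL \<union> SR" using akb j k by (auto simp: SL_def SR_def)
      qed
    qed
    have dj: "SL \<inter> SR = {}" using akb k hpos by (force simp: SL_def SR_def)
    have fin: "finite SL" "finite SR" by (auto simp: SL_def SR_def)
    have "card (SL \<union> SR) = card SL + card SR" using fin dj by (rule card_Un_disjoint)
    then have card: "card SL + card SR = n - 1" using un k by simp
    have "(\<Sum>j\<in>SL. measure lborel (X j)) \<le> a k - 0"
    proof (rule sum_le[where a=a and b=b])
      show "\<forall>j\<in>SL. X j = {a j<..<b j} \<and> X j \<subseteq> {0..a k}"
      proof
        fix j assume "j \<in> SL"
        then have j: "j \<in> {1..n}" "b j \<le> a k" by (auto simp: SL_def)
        then have "0 \<le> a j" using bnd by blast
        then show "X j = {a j<..<b j} \<and> X j \<subseteq> {0..a k}" using j ab by auto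
      qed
    qed (use disj bnd k in \<open>auto simp: SL_def\<close>)
    moreover have "(\<Sum>j\<in>SL. measure lborel (X j)) = real (card SL) * h"
      using lh by (simp add: l_def SL_def)
    ultimately have sL: "real (card SL) * h \<le> a k" by simp
    have "(\<Sum>j\<in>SR. measure lborel (X j)) \<le> 1 - b k"
    proof (rule sum_le[where a=a and b=b])
      show "\<forall>j\<in>SR. X j = {a j<..<b j} \<and> X j \<subseteq> {b k..1}"
      proof
        fix j assume "j \<in> SR"
        then have j: "j \<in> {1..n}" "b k \<le> a j" by (auto simp: SR_def)
        then have "b j \<le> 1" using bnd by blast
        then show "X j = {a j<..<b j} \<and> X j \<subseteq> {b k..1}" using j ab by auto
      qed
    qed (use disj bnd k akb in \<open>auto simp: SR_def\<close>)
    moreover have "(\<Sum>j\<in>SR. measure lborel (X j)) = real (card SR) * h"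
      using lh by (simp add: l_def SR_def)
    ultimately have sR: "real (card SR) * h \<le> 1 - b k" by simp
    have "(real (card SL) + real (card SR)) * h = (real n - 1) * h"
    proof -
      have "real (card SL + card SR) = real n - 1" using card n2 by (simp add: of_nat_diff)
      then show ?thesis by simp
    qed
    then have "real (card SL) * h + real (card SR) * h = 1 - h" using nh by (simp add: algebra_simps)
    moreover have "b k = a k + h" using akb k by blast
    ultimately have akv: "a k = real (card SL) * h" using sL sR by linarith
    have "card SL \<le> n - 1" using card by simp
    then have j: "card SL + 1 \<in> {1..n}" using n2 by auto
    have "X k = {(real (card SL + 1) - 1)*h<..<real (card SL + 1)*h}"
      using ab akb akv k by (simp add: algebra_simps)
    then show ?thesis using j by blast
  qed
  have gr: "\<forall>i\<in>{1..n}. \<exists>j\<in>{1..n}. X i = {(real j - 1) / real n <..< real j / real n}"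
    using grid by (simp add: h_def)
  have un: "util n eps n (X n) = 1 / real n" using utn lh n1 by (simp add: h_def)
  have ui: "util n eps i (X i) = 1/2" if i: "i \<in> {1..n-1}" for i
  proof -
    have i1: "i \<in> {1..n}" "i \<noteq> n" using i n2 by auto
    have uo': "util n eps i {x<..<y} = max 0 (min y (real i * h + eps) - max x (real i * h - eps)) / (2*eps)" for x y
      unfolding h_def by (rule util_other[OF i1(2) ep])
    have gu: "util n eps i {(real j - 1)*h<..<real j*h} = (if j = i \<or> j = i + 1 then 1/2 else 0)" for j
      unfolding uo' by (rule grid_util) (use ep e2 hpos in auto)
    have "real i * h \<le> real n * h" using i1 hpos by (intro mult_right_mono) auto
    then have "real i * h \<in> {0..1}" using nh hpos by auto
    then obtain k where k: "k \<in> {1..n}" "real i * h \<in> closure (X k)"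
      using comp unfolding is_complete_def by blast
    obtain j where j: "j \<in> {1..n}" "X k = {(real j - 1)*h<..<real j*h}" using grid k by blast
    have "(real j - 1)*h < real j * h" using hpos by (simp add: algebra_simps)
    then have "closure (X k) = {(real j - 1)*h .. real j*h}" using j(2) by simp
    then have "(real j - 1)*h \<le> real i * h" "real i * h \<le> real j * h" using k(2) by auto
    then have "real j - 1 \<le> real i" "real i \<le> real j" using hpos by auto
    then have "j = i \<or> j = i + 1" by linarith
    then have "util n eps i (X k) = 1/2" using j gu by simp
    moreover have "util n eps i (X i) \<ge> util n eps i (X k)"
      using ef i1(1) k(1) unfolding envy_free_def by blast
    ultimately have ge: "util n eps i (X i) \<ge> 1/2" by simp
    obtain j' where j': "X i = {(real j' - 1)*h<..<real j'*h}" using grid i1 by blast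
    show ?thesis using ge gu[of j'] unfolding j' by (cases "j' = i \<or> j' = i + 1") auto
  qed
  show ?thesis using gr un ui by blast
qed

lemma partB:
  fixes n :: nat and eps :: real
  assumes n2: "n > 2" and ep: "0 < eps" and eb: "eps < 1 / (real n * (real n + 1))"
  shows "let D = example_division n eps in
            is_division n D \<and> \<not> is_complete n D \<and> envy_free n eps D \<and>
            util n eps n (D n) = 1 / real n \<and>
            util n eps 1 (D 1) = 1 / 2 \<and>
            (\<forall>i\<in>{2..n-1}. util n eps i (D i) = 1)"
proof -
  define h where "h = 1 / real n"
  have hpos: "h > 0" using n2 by (simp add: h_def)
  have nh: "real n * h = 1" using n2 by (simp add: h_def)
  have e1: "(real n + 1) * eps < h"
  proof -
    have pos: "0 < real n * (real n + 1)" using n2 by simp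
    have "eps * (real n * (real n + 1)) < 1" using eb pos_less_divide_eq[OF pos] by blast
    then show ?thesis using n2 by (simp add: h_def field_simps)
  qed
  have "4 * eps \<le> (real n + 1) * eps" using n2 ep by (intro mult_right_mono) auto
  then have e2: "4 * eps < h" using e1 by linarith
  have "3 * h \<le> real n * h" using n2 hpos by (intro mult_right_mono) auto
  then have h3: "3 * h \<le> 1" using nh by simp
  have ne: "real n * eps > 0" using n2 ep by simp
  define D where "D = example_division n eps"
  define \<alpha> where "\<alpha> i = (if i = n then 0 else if i = 1 then h else real i * h - real i * eps)" for i
  define \<beta> where "\<beta> i = (if i = n then h else if i = 1 then 2*h - 2*eps else real i * h + h - real i * eps - eps)" for i
  have Dab: "D i = {\<alpha> i<..<\<beta> i}" for i
    unfolding D_def example_division_def \<alpha>_def \<beta>_def h_def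
    by (simp add: algebra_simps add_divide_distrib)
  have mid: "2*h \<le> real i * h \<and> real i * h + h \<le> 1 \<and> 2 * eps \<le> real i * eps \<and> real i * eps + 2 * eps < h"
    if "i \<in> {2..n-1}" for i
  proof -
    have i: "2 \<le> real i" "real i + 1 \<le> real n" using that n2 by auto
    have "2*h \<le> real i * h" using i hpos by (intro mult_right_mono) auto
    moreover have "(real i + 1) * h \<le> real n * h" using i hpos by (intro mult_right_mono) auto
    moreover have "2 * eps \<le> real i * eps" using i ep by (intro mult_right_mono) auto
    moreover have "(real i + 2) * eps \<le> (real n + 1) * eps" using i ep by (intro mult_right_mono) auto
    ultimately show ?thesis using nh e1 by (simp add: algebra_simps)
  qed
  have mid2: "2*h \<le> real i * h \<and> real i * h + h \<le> 1 \<and> 2 * eps \<le> real i * eps \<and> real i * eps + 2 * eps < h"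
    if "i \<in> {1..n}" "i \<noteq> 1" "i \<noteq> n" for i
    using mid[of i] that by auto
  have nie: "0 \<le> real i * eps" for i using ep by simp
  have ord: "real i * h + h - real i * eps - eps \<le> real j * h - real j * eps"
    if "i \<in> {2..n-1}" "j \<in> {2..n-1}" "i < j" for i j
  proof -
    have "real i + 1 \<le> real j" using that by auto
    then have "(real i + 1) * (h - eps) \<le> real j * (h - eps)" using e2 ep by (intro mult_right_mono) auto
    then show ?thesis by (simp add: algebra_simps)
  qed
  have ab_lt: "\<alpha> i < \<beta> i" if "i \<in> {1..n}" for i
    using that mid2[of i] nie e2 ep hpos by (auto simp: \<alpha>_def \<beta>_def)
  have a0: "0 \<le> \<alpha> i" and b1: "\<beta> i < 1" if "i \<in> {1..n}" for i
  proof -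
    have "(0 \<le> \<alpha> i) \<and> \<beta> i < 1"
    proof (cases "i = n \<or> i = 1")
      case True then show ?thesis using e2 ep hpos h3 by (auto simp: \<alpha>_def \<beta>_def)
    next
      case False
      then have m: "2*h \<le> real i * h" "real i * h + h \<le> 1" "2 * eps \<le> real i * eps" "real i * eps + 2 * eps < h"
        using mid2[of i] that by auto
      have "\<alpha> i = real i * h - real i * eps" "\<beta> i = real i * h + h - real i * eps - eps"
        using False by (auto simp: \<alpha>_def \<beta>_def)
      then show ?thesis using m ep by linarith
    qed
    then show "0 \<le> \<alpha> i" "\<beta> i < 1" by auto
  qed
  have aj: "h \<le> \<alpha> j \<and> (j \<noteq> 1 \<longrightarrow> 2*h - 2*eps \<le> \<alpha> j)" if "j \<in> {1..n}" "j \<noteq> n" for j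
  proof (cases "j = 1")
    case True then show ?thesis using that by (simp add: \<alpha>_def)
  next
    case False
    then have j2: "2 \<le> real j" using that by auto
    then have "2 * (h - eps) \<le> real j * (h - eps)" using e2 ep by (intro mult_right_mono) auto
    moreover have "\<alpha> j = real j * (h - eps)" using False that by (simp add: \<alpha>_def algebra_simps)
    ultimately show ?thesis using e2 ep False by auto
  qed
  have bn: "\<beta> n = h" and b1': "\<beta> 1 = 2*h - 2*eps" using n2 by (auto simp: \<beta>_def)
  have sep: "\<beta> i \<le> \<alpha> j \<or> \<beta> j \<le> \<alpha> i" if ij: "i \<in> {1..n}" "j \<in> {1..n}" "i \<noteq> j" for i j
  proof -
    consider "i = n" | "j = n" | "i = 1" "j \<noteq> n" | "j = 1" "i \<noteq> n" | "i \<in> {2..n-1}" "j \<in> {2..n-1}"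
      using ij by force
    then show ?thesis
    proof cases
      case 1 then show ?thesis using ij aj[of j] bn by auto
    next
      case 2 then show ?thesis using ij aj[of i] bn by auto
    next
      case 3 then show ?thesis using ij aj[of j] b1' by auto
    next
      case 4 then show ?thesis using ij aj[of i] b1' by auto
    next
      case 5
      then have "i < j \<or> j < i" using ij by auto
      then show ?thesis using 5 ord[of i j] ord[of j i] n2 by (auto simp: \<alpha>_def \<beta>_def)
    qed
  qed
  have isd: "is_division n D"
    unfolding is_division_def
  proof (intro conjI ballI impI)
    fix i assume i: "i \<in> {1..n}"
    show "\<exists>a b. D i = {a<..<b}" using Dab by blast
    show "D i \<subseteq> {0..1}" using Dab a0[OF i] b1[OF i] by auto
  next
    fix i j assume "i \<in> {1..n}" "j \<in> {1..n}" "i \<noteq> j"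
    then have "\<beta> i \<le> \<alpha> j \<or> \<beta> j \<le> \<alpha> i" by (rule sep)
    then show "D i \<inter> D j = {}" unfolding Dab by auto
  qed
  have nc: "\<not> is_complete n D"
  proof
    assume "is_complete n D"
    then have "(1::real) \<in> (\<Union>i\<in>{1..n}. closure (D i))" unfolding is_complete_def by simp
    then obtain i where i: "i \<in> {1..n}" "(1::real) \<in> closure (D i)" by blast
    then have "closure (D i) = {\<alpha> i..\<beta> i}" using ab_lt[OF i(1)] Dab by simp
    then show False using i b1[OF i(1)] by simp
  qed
  have uo: "util n eps i {x<..<y} = max 0 (min y (real i * h + eps) - max x (real i * h - eps)) / (2*eps)"
    if "i \<noteq> n" for i x y
    unfolding h_def by (rule util_other[OF that ep])
  have le1: "util n eps i {x<..<y} \<le> 1" if "i \<noteq> n" for i x y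
    unfolding uo[OF that] using ep by (auto simp: max_def min_def divide_le_eq)
  have umeas: "util n eps n (D j) = \<beta> j - \<alpha> j" if "j \<in> {1..n}" for j
  proof -
    have "util n eps n (D j) = measure lborel (D j)"
      by (rule util_n) (use Dab a0[OF that] b1[OF that] in auto)
    then show ?thesis using Dab ab_lt[OF that] by (simp add: meas_Ioo)
  qed
  have n1: "n \<in> {1..n}" and o1: "1 \<in> {1..n}" "1 \<noteq> n" using n2 by auto
  have un: "util n eps n (D n) = h" using umeas[OF n1] by (simp add: \<alpha>_def \<beta>_def)
  have u1: "util n eps 1 (D j) \<le> 1/2" if "j \<in> {1..n}" for j
  proof -
    have "max 0 (min (\<beta> j) (h + eps) - max (\<alpha> j) (h - eps)) \<le> eps"
    proof (cases "j = n \<or> j = 1")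
      case True then show ?thesis using e2 ep by (auto simp: \<alpha>_def \<beta>_def max_def min_def)
    next
      case False
      then have m: "2*h \<le> real j * h" "real j * eps + 2 * eps < h"
        using mid2[of j] that by auto
      have "\<alpha> j = real j * h - real j * eps" using False by (auto simp: \<alpha>_def)
      then have "h + eps \<le> \<alpha> j" using m ep by linarith
      then show ?thesis using ep by (auto simp: max_def min_def)
    qed
    then show ?thesis unfolding Dab uo[OF o1(2)] using ep by (simp add: divide_le_eq)
  qed
  have u11: "util n eps 1 (D 1) = 1/2"
    unfolding Dab uo[OF o1(2)] using o1 e2 ep by (simp add: \<alpha>_def \<beta>_def max_def min_def)
  have ui: "util n eps i (D i) = 1" if "i \<in> {2..n-1}" for i
  proof -
    have i: "i \<noteq> n" "i \<noteq> 1" using that n2 by auto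
    have m: "2 * eps \<le> real i * eps" "real i * eps + 2 * eps < h" using mid[OF that] by auto
    have ab: "\<alpha> i = real i * h - real i * eps" "\<beta> i = real i * h + h - real i * eps - eps"
      using i by (auto simp: \<alpha>_def \<beta>_def)
    have "min (\<beta> i) (real i * h + eps) = real i * h + eps" using ab m by simp
    moreover have "max (\<alpha> i) (real i * h - eps) = real i * h - eps" using ab m ep by simp
    ultimately show ?thesis unfolding Dab uo[OF i(1)] using ep by simp
  qed
  have ef: "envy_free n eps D"
    unfolding envy_free_def
  proof (intro ballI)
    fix i j assume i: "i \<in> {1..n}" and j: "j \<in> {1..n}"
    consider "i = n" | "i = 1" "i \<noteq> n" | "i \<in> {2..n-1}" using i by force
    then show "util n eps i (D j) \<le> util n eps i (D i)"
    proof cases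
      case 1
      have "\<beta> j - \<alpha> j \<le> h" using j mid2[of j] nie ep by (auto simp: \<alpha>_def \<beta>_def)
      then show ?thesis using 1 umeas[OF j] un by simp
    next
      case 2 then show ?thesis using u1[OF j] u11 by simp
    next
      case 3
      have "i \<noteq> n" using 3 n2 by auto
      then show ?thesis using le1[of i] ui[OF 3] Dab by metis
    qed
  qed
  show ?thesis unfolding D_def[symmetric] Let_def
    using isd nc ef un u11 ui by (simp add: h_def)
qed

theorem mainTheorem13:
  fixes n :: nat and eps :: real
  assumes "n > 2" and "0 < eps" and "eps < 1 / (real n * (real n + 1))"
  shows "(\<forall>X. is_division n X \<and> is_complete n X \<and> envy_free n eps X \<longrightarrow>
            (\<forall>i\<in>{1..n}. \<exists>j\<in>{1..n}. X i = {(real j - 1) / real n <..< real j / real n}) \<and>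
            util n eps n (X n) = 1 / real n \<and>
            (\<forall>i\<in>{1..n-1}. util n eps i (X i) = 1 / 2))
       \<and> (let D = example_division n eps in
            is_division n D \<and> \<not> is_complete n D \<and> envy_free n eps D \<and>
            util n eps n (D n) = 1 / real n \<and>
            util n eps 1 (D 1) = 1 / 2 \<and>
            (\<forall>i\<in>{2..n-1}. util n eps i (D i) = 1))"
  using partA[OF assms] partB[OF assms] by blast

end
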